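(* Let $A=(S^c)_{sa}$ and let $L(\phi)=\max_{i=1,2,3}\|\delta_i(\phi)\|_{\infty,\infty,1}$. Then for all states $\omega_1,\omega_2\in S(A)$, $$\rho_L(\omega_1,\omega_2)=\sup\{|\omega_1(a)-\omega_2(a)|:\ a\in A,\ L(a)\le1\}\le 6.$$
   Context: Let $\mathbb T=\mathbb R/\mathbb Z$ and $e(t)=e^{2\pi it}$. Fix a positive integer $c$ and real numbers $\hbar,\mu,\nu$ with $\mu^2+\nu^2\ne0$. $S^c$ is the space of $C^\infty$ functions $\Phi:\mathbb R\times\mathbb T\times\mathbb Z\to\mathbb C$ satisfying two conditions: (a) $\Phi(x+k,y,p)=e(ckpy)\Phi(x,y,p)$ for all $k\in\mathbb Z$; (b) for every polynomial $P$ on $\mathbb Z$, every $m,n\ge0$ and every compact $K\subset\mathbb R\times\mathbb T$, the function $P(p)\,\partial_x^m\partial_y^n\Phi$ is bounded on $K\times\mathbb Z$. Product and involution on $S^c$: $$(\Phi\star\Psi)(x,y,p)=\sum_{q}\Phi(x-\hbar(q-p)\mu,\,y-\hbar(q-p)\nu,\,q)\,\Psi(x-\hbar q\mu,\,y-\hbar q\nu,\,p-q),$$ $$\Phi^*(x,y,p)=\overline{\Phi(x,y,-p)}.$$ These act faithfully on $L^2(\mathbb R\times\mathbb T\times\mathbb Z)$ via $$(\pi(\Phi)\xi)(x,y,p)=\sum_q\Phi(x-\hbar(q-2p)\mu,\,y-\hbar(q-2p)\nu,\,q)\,\xi(x,y,p-q).$$ The C*-norm on $S^c$ is the operator norm of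 $\pi(\cdot)$. The identity $I$ is $(x,y,p)\mapsto\delta_{p0}$. $A=(S^c)_{sa}$ is the self-adjoint part, an order unit space with order unit $I$, order inherited from the C*-algebra, and the C*-norm. A state of $A$ is a bounded linear functional $\omega$ with $\omega(I)=1=\|\omega\|$; $S(A)$ is the set of states. The norm $\|\cdot\|_{\infty,\infty,1}$ is defined by $\|\phi\|_{\infty,\infty,1}=\sum_{p\in\mathbb Z}\sup_{x\in\mathbb R,y\in\mathbb T}|\phi(x,y,p)|$. The derivations are: $$\delta_1(\phi)=-\partial_x\phi,$$ $$\delta_2(\phi)(x,y,p)=2\pi icpx\,\phi(x,y,p)-\partial_y\phi(x,y,p),$$ $$\delta_3(\phi)(x,y,p)=2\pi ip\,\phi(x,y,p).$$ *)

theory Defs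
  imports "HOL-Analysis.Analysis" "HOL-Computational_Algebra.Polynomial"
begin

text \<open>Functions on R x T x Z are represented as functions real => real => int => complex
  that are 1-periodic in the second (torus) variable.\<close>

type_synonym fn3 = "real \<Rightarrow> real \<Rightarrow> int \<Rightarrow> complex"

definition e :: "real \<Rightarrow> complex" where
  "e t = cis (2 * pi * t)"

definition dx2 :: "(real \<Rightarrow> real \<Rightarrow> complex) \<Rightarrow> real \<Rightarrow> real \<Rightarrow> complex" where
  "dx2 f x y = vector_derivative (\<lambda>t. f t y) (at x)"

definition dy2 :: "(real \<Rightarrow> real \<Rightarrow> complex) \<Rightarrow> real \<Rightarrow> real \<Rightarrow> complex" where
  "dy2 f x y = vector_derivative (\<lambda>t. f x t) (at y)"

text \<open>Iterated partial derivative along a word (True = d/dx, False = d/dy).\<close>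
fun dword :: "bool list \<Rightarrow> (real \<Rightarrow> real \<Rightarrow> complex) \<Rightarrow> real \<Rightarrow> real \<Rightarrow> complex" where
  "dword [] f = f"
| "dword (b # bs) f = (if b then dx2 else dy2) (dword bs f)"

definition smooth2 :: "(real \<Rightarrow> real \<Rightarrow> complex) \<Rightarrow> bool" where
  "smooth2 f \<longleftrightarrow> (\<forall>ws. continuous_on UNIV (\<lambda>z. dword ws f (fst z) (snd z))
      \<and> (\<forall>x y. (\<lambda>t. dword ws f t y) differentiable (at x)
              \<and> (\<lambda>t. dword ws f x t) differentiable (at y)))"

definition pdx :: "fn3 \<Rightarrow> fn3" where
  "pdx \<Phi> x y p = dx2 (\<lambda>a b. \<Phi> a b p) x y"

definition pdy :: "fn3 \<Rightarrow> fn3" where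
  "pdy \<Phi> x y p = dy2 (\<lambda>a b. \<Phi> a b p) x y"

definition Sc :: "int \<Rightarrow> fn3 set" where
  "Sc c = {\<Phi>.
     (\<forall>p. smooth2 (\<lambda>x y. \<Phi> x y p)) \<and>
     (\<forall>x y p. \<Phi> x (y + 1) p = \<Phi> x y p) \<and>
     (\<forall>x y p (k::int). \<Phi> (x + of_int k) y p = e (of_int c * of_int k * of_int p * y) * \<Phi> x y p) \<and>
     (\<forall>(P::real poly) m n (K::(real \<times> real) set). compact K \<longrightarrow>
        (\<exists>B. \<forall>z\<in>K. \<forall>p. norm (of_real (poly P (of_int p)) * (pdx ^^ m) ((pdy ^^ n) \<Phi>) (fst z) (snd z) p) \<le> B))}"

definition invol :: "fn3 \<Rightarrow> fn3" where
  "invol \<Phi> x y p = cnj (\<Phi> x y (- p))"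

definition unitI :: fn3 where
  "unitI x y p = (if p = 0 then 1 else 0)"

text \<open>L^2(R x T x Z): squared norm, with T = [0,1).\<close>
definition l2sq :: "fn3 \<Rightarrow> ennreal" where
  "l2sq \<xi> = (\<integral>\<^sup>+ p. (\<integral>\<^sup>+ z. ennreal ((norm (\<xi> (fst z) (snd z) p))\<^sup>2)
        * indicator (UNIV \<times> {0..<1}) z \<partial>lborel) \<partial>count_space UNIV)"

definition L2unit :: "fn3 set" where
  "L2unit = {\<xi>. (\<forall>p. (\<lambda>z. \<xi> (fst z) (snd z) p) \<in> borel_measurable borel) \<and> l2sq \<xi> \<le> 1}"

definition repr :: "real \<Rightarrow> real \<Rightarrow> real \<Rightarrow> fn3 \<Rightarrow> fn3 \<Rightarrow> fn3" where
  "repr h \<mu> \<nu> \<Phi> \<xi> x y p =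
     (\<Sum>\<^sub>\<infinity>q. \<Phi> (x - h * of_int (q - 2 * p) * \<mu>) (y - h * of_int (q - 2 * p) * \<nu>) q * \<xi> x y (p - q))"

definition cnorm :: "real \<Rightarrow> real \<Rightarrow> real \<Rightarrow> fn3 \<Rightarrow> real" where
  "cnorm h \<mu> \<nu> \<Phi> = sqrt (enn2real (SUP \<xi>\<in>L2unit. l2sq (repr h \<mu> \<nu> \<Phi> \<xi>)))"

definition Asa :: "int \<Rightarrow> fn3 set" where
  "Asa c = {\<Phi> \<in> Sc c. invol \<Phi> = \<Phi>}"

definition states :: "int \<Rightarrow> real \<Rightarrow> real \<Rightarrow> real \<Rightarrow> (fn3 \<Rightarrow> real) set" where
  "states c h \<mu> \<nu> = {\<omega>.
     (\<forall>a\<in>Asa c. \<forall>b\<in>Asa c. \<omega> (\<lambda>x y p. a x y p + b x y p) = \<omega> a + \<omega> b) \<and>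
     (\<forall>a\<in>Asa c. \<forall>r::real. \<omega> (\<lambda>x y p. of_real r * a x y p) = r * \<omega> a) \<and>
     (\<exists>K. \<forall>a\<in>Asa c. \<bar>\<omega> a\<bar> \<le> K * cnorm h \<mu> \<nu> a) \<and>
     \<omega> unitI = 1 \<and>
     (SUP a\<in>{a\<in>Asa c. cnorm h \<mu> \<nu> a \<le> 1}. \<bar>\<omega> a\<bar>) = 1}"

definition norm_ii1 :: "fn3 \<Rightarrow> ennreal" where
  "norm_ii1 \<phi> = (\<integral>\<^sup>+ p. (SUP z\<in>(UNIV::(real\<times>real) set). ennreal (norm (\<phi> (fst z) (snd z) p))) \<partial>count_space UNIV)"

definition delta1 :: "fn3 \<Rightarrow> fn3" where
  "delta1 \<phi> x y p = - pdx \<phi> x y p"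

definition delta2 :: "int \<Rightarrow> fn3 \<Rightarrow> fn3" where
  "delta2 c \<phi> x y p = 2 * pi * \<i> * of_int c * of_int p * of_real x * \<phi> x y p - pdy \<phi> x y p"

definition delta3 :: "fn3 \<Rightarrow> fn3" where
  "delta3 \<phi> x y p = 2 * pi * \<i> * of_int p * \<phi> x y p"

definition Lnorm :: "int \<Rightarrow> fn3 \<Rightarrow> ennreal" where
  "Lnorm c \<phi> = max (norm_ii1 (delta1 \<phi>)) (max (norm_ii1 (delta2 c \<phi>)) (norm_ii1 (delta3 \<phi>)))"

definition rhoL :: "int \<Rightarrow> (fn3 \<Rightarrow> real) \<Rightarrow> (fn3 \<Rightarrow> real) \<Rightarrow> ereal" where
  "rhoL c \<omega>1 \<omega>2 = (SUP a\<in>{a\<in>Asa c. Lnorm c a \<le> 1}. ereal \<bar>\<omega>1 a - \<omega>2 a\<bar>)"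

end

theory Submission
  imports Defs
begin

lemma dword_append: "dword (xs @ ys) f = dword xs (dword ys f)"
  by (induction xs) auto

lemma pdy_pow: "(pdy ^^ n) \<Phi> x y p = dword (replicate n False) (\<lambda>a b. \<Phi> a b p) x y"
proof (induction n arbitrary: x y)
  case 0 then show ?case by simp
next
  case (Suc n)
  have "(pdy ^^ Suc n) \<Phi> x y p = dy2 (\<lambda>a b. (pdy ^^ n) \<Phi> a b p) x y"
    by (simp add: pdy_def)
  also have "(\<lambda>a b. (pdy ^^ n) \<Phi> a b p) = dword (replicate n False) (\<lambda>a b. \<Phi> a b p)"
    using Suc by (intro ext) simp
  finally show ?case by simp
qed

lemma pdx_pow: "(pdx ^^ n) \<Phi> x y p = dword (replicate n True) (\<lambda>a b. \<Phi> a b p) x y"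
proof (induction n arbitrary: x y)
  case 0 then show ?case by simp
next
  case (Suc n)
  have "(pdx ^^ Suc n) \<Phi> x y p = dx2 (\<lambda>a b. (pdx ^^ n) \<Phi> a b p) x y"
    by (simp add: pdx_def)
  also have "(\<lambda>a b. (pdx ^^ n) \<Phi> a b p) = dword (replicate n True) (\<lambda>a b. \<Phi> a b p)"
    using Suc by (intro ext) simp
  finally show ?case by simp
qed

lemma pdxy_pow: "(pdx ^^ m) ((pdy ^^ n) \<Phi>) x y p = dword (replicate m True @ replicate n False) (\<lambda>a b. \<Phi> a b p) x y"
proof -
  have "(\<lambda>a b. (pdy ^^ n) \<Phi> a b p) = dword (replicate n False) (\<lambda>a b. \<Phi> a b p)"
    by (intro ext) (simp add: pdy_pow)
  then show ?thesis by (simp add: pdx_pow dword_append)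
qed

lemma dword_lin:
  assumes f: "smooth2 f" and g: "smooth2 g"
  shows "dword ws (\<lambda>x y. \<alpha> * f x y + \<beta> * g x y) = (\<lambda>x y. \<alpha> * dword ws f x y + \<beta> * dword ws g x y)"
proof (induction ws)
  case Nil then show ?case by simp
next
  case (Cons b bs)
  have df: "\<And>x y. (\<lambda>t. dword bs f t y) differentiable (at x)" "\<And>x y. (\<lambda>t. dword bs f x t) differentiable (at y)"
    using f unfolding smooth2_def by auto
  have dg: "\<And>x y. (\<lambda>t. dword bs g t y) differentiable (at x)" "\<And>x y. (\<lambda>t. dword bs g x t) differentiable (at y)"
    using g unfolding smooth2_def by auto
  show ?case
  proof (cases b)
    case True
    show ?thesis
    proof (intro ext)
      fix x y
      have h1: "((\<lambda>t. dword bs f t y) has_vector_derivative dx2 (dword bs f) x y) (at x)"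
        unfolding dx2_def using df(1) by (rule vector_derivative_works[THEN iffD1])
      have h2: "((\<lambda>t. dword bs g t y) has_vector_derivative dx2 (dword bs g) x y) (at x)"
        unfolding dx2_def using dg(1) by (rule vector_derivative_works[THEN iffD1])
      have "((\<lambda>t. \<alpha> * dword bs f t y + \<beta> * dword bs g t y) has_vector_derivative
          \<alpha> * dx2 (dword bs f) x y + \<beta> * dx2 (dword bs g) x y) (at x)"
        by (intro derivative_intros h1 h2)
      then show "dword (b # bs) (\<lambda>x y. \<alpha> * f x y + \<beta> * g x y) x y =
         \<alpha> * dword (b # bs) f x y + \<beta> * dword (b # bs) g x y"
        using True Cons by (simp add: dx2_def vector_derivative_at)
    qed
  next
    case False
    show ?thesis
    proof (intro ext)
      fix x y
      have h1: "((\<lambda>t. dword bs f x t) has_vector_derivative dy2 (dword bs f) x y) (at y)"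
        unfolding dy2_def using df(2) by (rule vector_derivative_works[THEN iffD1])
      have h2: "((\<lambda>t. dword bs g x t) has_vector_derivative dy2 (dword bs g) x y) (at y)"
        unfolding dy2_def using dg(2) by (rule vector_derivative_works[THEN iffD1])
      have "((\<lambda>t. \<alpha> * dword bs f x t + \<beta> * dword bs g x t) has_vector_derivative
          \<alpha> * dy2 (dword bs f) x y + \<beta> * dy2 (dword bs g) x y) (at y)"
        by (intro derivative_intros h1 h2)
      then show "dword (b # bs) (\<lambda>x y. \<alpha> * f x y + \<beta> * g x y) x y =
         \<alpha> * dword (b # bs) f x y + \<beta> * dword (b # bs) g x y"
        using False Cons by (simp add: dy2_def vector_derivative_at)
    qed
  qed
qed

lemma smooth2_lin:
  assumes f: "smooth2 f" and g: "smooth2 g"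
  shows "smooth2 (\<lambda>x y. \<alpha> * f x y + \<beta> * g x y)"
  unfolding smooth2_def dword_lin[OF f g]
proof (intro allI conjI)
  fix ws x y
  have cf: "continuous_on UNIV (\<lambda>z. dword ws f (fst z) (snd z))" and cg: "continuous_on UNIV (\<lambda>z. dword ws g (fst z) (snd z))"
    using f g unfolding smooth2_def by auto
  show "continuous_on UNIV (\<lambda>z. \<alpha> * dword ws f (fst z) (snd z) + \<beta> * dword ws g (fst z) (snd z))"
    by (intro continuous_intros cf cg)
  have df: "(\<lambda>t. dword ws f t y) differentiable (at x)" "(\<lambda>t. dword ws f x t) differentiable (at y)"
    using f unfolding smooth2_def by auto
  have dg: "(\<lambda>t. dword ws g t y) differentiable (at x)" "(\<lambda>t. dword ws g x t) differentiable (at y)"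
    using g unfolding smooth2_def by auto
  show "(\<lambda>t. \<alpha> * dword ws f t y + \<beta> * dword ws g t y) differentiable (at x)"
    using df dg by (intro differentiable_add differentiable_mult differentiable_const) auto
  show "(\<lambda>t. \<alpha> * dword ws f x t + \<beta> * dword ws g x t) differentiable (at y)"
    using df dg by (intro differentiable_add differentiable_mult differentiable_const) auto
qed

lemma dword_const: "dword ws (\<lambda>x y. k) = (\<lambda>x y. if ws = [] then k else 0)"
proof (induction ws)
  case Nil then show ?case by simp
next
  case (Cons b bs)
  then show ?case
    by (cases bs) (auto simp: dx2_def dy2_def vector_derivative_const_at intro!: ext)
qed

lemma smooth2_const: "smooth2 (\<lambda>x y. k)"
  unfolding smooth2_def dword_const by auto

lemma ScD:
  assumes "\<Phi> \<in> Sc c"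
  shows "\<And>p. smooth2 (\<lambda>x y. \<Phi> x y p)" "\<And>x y p. \<Phi> x (y + 1) p = \<Phi> x y p"
    "\<And>x y p k. \<Phi> (x + of_int k) y p = e (of_int c * of_int k * of_int p * y) * \<Phi> x y p"
    "\<And>P m n K. compact K \<Longrightarrow> (\<exists>B. \<forall>z\<in>K. \<forall>p. norm (of_real (poly P (of_int p)) * (pdx ^^ m) ((pdy ^^ n) \<Phi>) (fst z) (snd z) p) \<le> B)"
proof -
  have H: "(\<forall>p. smooth2 (\<lambda>x y. \<Phi> x y p)) \<and>
     (\<forall>x y p. \<Phi> x (y + 1) p = \<Phi> x y p) \<and>
     (\<forall>x y p (k::int). \<Phi> (x + of_int k) y p = e (of_int c * of_int k * of_int p * y) * \<Phi> x y p) \<and>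
     (\<forall>(P::real poly) m n (K::(real \<times> real) set). compact K \<longrightarrow>
        (\<exists>B. \<forall>z\<in>K. \<forall>p. norm (of_real (poly P (of_int p)) * (pdx ^^ m) ((pdy ^^ n) \<Phi>) (fst z) (snd z) p) \<le> B))"
    using assms unfolding Sc_def by (rule CollectD)
  note h1 = H[THEN conjunct1, rule_format]
  note h2 = H[THEN conjunct2, THEN conjunct1, rule_format]
  note h3 = H[THEN conjunct2, THEN conjunct2, THEN conjunct1, rule_format]
  note h4 = H[THEN conjunct2, THEN conjunct2, THEN conjunct2, rule_format]
  show "\<And>p. smooth2 (\<lambda>x y. \<Phi> x y p)" by (rule h1)
  show "\<And>x y p. \<Phi> x (y + 1) p = \<Phi> x y p" by (rule h2)
  show "\<And>x y p k. \<Phi> (x + of_int k) y p = e (of_int c * of_int k * of_int p * y) * \<Phi> x y p" by (rule h3)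
  show "\<And>P m n K. compact K \<Longrightarrow> (\<exists>B. \<forall>z\<in>K. \<forall>p. norm (of_real (poly P (of_int p)) * (pdx ^^ m) ((pdy ^^ n) \<Phi>) (fst z) (snd z) p) \<le> B)"
    by (rule h4)
qed

lemma Sc_lin:
  assumes A: "\<Phi> \<in> Sc c" and B: "\<Psi> \<in> Sc c"
  shows "(\<lambda>x y p. \<alpha> * \<Phi> x y p + \<beta> * \<Psi> x y p) \<in> Sc c"
proof -
  have sA: "\<And>p. smooth2 (\<lambda>x y. \<Phi> x y p)" and sB: "\<And>p. smooth2 (\<lambda>x y. \<Psi> x y p)"
    using ScD(1)[OF A] ScD(1)[OF B] by auto
  have D: "(pdx ^^ m) ((pdy ^^ n) (\<lambda>x y p. \<alpha> * \<Phi> x y p + \<beta> * \<Psi> x y p)) x y p =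
      \<alpha> * (pdx ^^ m) ((pdy ^^ n) \<Phi>) x y p + \<beta> * (pdx ^^ m) ((pdy ^^ n) \<Psi>) x y p" for m n x y p
    unfolding pdxy_pow using dword_lin[OF sA sB] by simp
  show ?thesis
    unfolding Sc_def
  proof (rule CollectI, intro conjI allI impI)
    fix p show "smooth2 (\<lambda>x y. \<alpha> * \<Phi> x y p + \<beta> * \<Psi> x y p)"
      using smooth2_lin[OF sA sB] .
  next
    fix x y p show "\<alpha> * \<Phi> x (y + 1) p + \<beta> * \<Psi> x (y + 1) p = \<alpha> * \<Phi> x y p + \<beta> * \<Psi> x y p"
      using ScD(2)[OF A] ScD(2)[OF B] by simp
  next
    fix x y p and k :: int
    show "\<alpha> * \<Phi> (x + of_int k) y p + \<beta> * \<Psi> (x + of_int k) y p =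
        e (of_int c * of_int k * of_int p * y) * (\<alpha> * \<Phi> x y p + \<beta> * \<Psi> x y p)"
    proof -
      have "\<Phi> (x + of_int k) y p = e (of_int c * of_int k * of_int p * y) * \<Phi> x y p"
        "\<Psi> (x + of_int k) y p = e (of_int c * of_int k * of_int p * y) * \<Psi> x y p"
        using ScD(3)[OF A] ScD(3)[OF B] by blast+
      then show ?thesis by (simp add: distrib_left mult.left_commute)
    qed
  next
    fix P :: "real poly" and m n and K :: "(real \<times> real) set"
    assume K: "compact K"
    obtain B1 where B1: "\<forall>z\<in>K. \<forall>p. norm (of_real (poly P (of_int p)) * (pdx ^^ m) ((pdy ^^ n) \<Phi>) (fst z) (snd z) p) \<le> B1"
      using ScD(4)[OF A K] by blast
    obtain B2 where B2: "\<forall>z\<in>K. \<forall>p. norm (of_real (poly P (of_int p)) * (pdx ^^ m) ((pdy ^^ n) \<Psi>) (fst z) (snd z) p) \<le> B2"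
      using ScD(4)[OF B K] by blast
    show "\<exists>B. \<forall>z\<in>K. \<forall>p. norm (of_real (poly P (of_int p)) * (pdx ^^ m) ((pdy ^^ n) (\<lambda>x y p. \<alpha> * \<Phi> x y p + \<beta> * \<Psi> x y p)) (fst z) (snd z) p) \<le> B"
    proof (intro exI ballI allI)
      fix z p assume z: "z \<in> K"
      let ?P = "of_real (poly P (of_int p)) :: complex"
      let ?a = "(pdx ^^ m) ((pdy ^^ n) \<Phi>) (fst z) (snd z) p"
      let ?b = "(pdx ^^ m) ((pdy ^^ n) \<Psi>) (fst z) (snd z) p"
      have "norm (?P * (\<alpha> * ?a + \<beta> * ?b)) = norm (\<alpha> * (?P * ?a) + \<beta> * (?P * ?b))"
        by (simp add: algebra_simps)
      also have "\<dots> \<le> norm \<alpha> * norm (?P * ?a) + norm \<beta> * norm (?P * ?b)"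
        by (rule order_trans[OF norm_triangle_ineq]) (simp add: norm_mult)
      also have "\<dots> \<le> norm \<alpha> * B1 + norm \<beta> * B2"
      proof -
        have "norm (?P * ?a) \<le> B1" using B1 z by blast
        moreover have "norm (?P * ?b) \<le> B2" using B2 z by blast
        ultimately show ?thesis by (intro add_mono mult_left_mono) auto
      qed
      finally show "norm (?P * (pdx ^^ m) ((pdy ^^ n) (\<lambda>x y p. \<alpha> * \<Phi> x y p + \<beta> * \<Psi> x y p)) (fst z) (snd z) p) \<le> norm \<alpha> * B1 + norm \<beta> * B2"
        by (simp add: D)
    qed
  qed
qed

lemma Asa_lin:
  assumes A: "\<Phi> \<in> Asa c" and B: "\<Psi> \<in> Asa c"
  shows "(\<lambda>x y p. of_real r * \<Phi> x y p + of_real s * \<Psi> x y p) \<in> Asa c"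
proof -
  have iA: "\<And>x y p. cnj (\<Phi> x y (-p)) = \<Phi> x y p" and iB: "\<And>x y p. cnj (\<Psi> x y (-p)) = \<Psi> x y p"
    using A B unfolding Asa_def invol_def by (auto dest!: fun_cong)
  have "(\<lambda>x y p. of_real r * \<Phi> x y p + of_real s * \<Psi> x y p) \<in> Sc c"
    using A B Sc_lin[of \<Phi> c \<Psi>] unfolding Asa_def by blast
  moreover have "invol (\<lambda>x y p. of_real r * \<Phi> x y p + of_real s * \<Psi> x y p) = (\<lambda>x y p. of_real r * \<Phi> x y p + of_real s * \<Psi> x y p)"
    unfolding invol_def by (intro ext) (simp add: iA iB)
  ultimately show ?thesis unfolding Asa_def by blast
qed

lemma e0: "e 0 = 1" by (simp add: e_def)

lemma unitI_Sc: "unitI \<in> Sc c"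
proof -
  have D: "(pdx ^^ m) ((pdy ^^ n) unitI) x y p = (if replicate m True @ replicate n False = [] then unitI x y p else 0)" for m n x y p
    unfolding pdxy_pow unitI_def dword_const by simp
  show ?thesis unfolding Sc_def
  proof (rule CollectI, intro conjI allI impI)
    fix p show "smooth2 (\<lambda>x y. unitI x y p)" unfolding unitI_def by (rule smooth2_const)
  next
    fix x y p show "unitI x (y + 1) p = unitI x y p" by (simp add: unitI_def)
  next
    fix x y p and k :: int show "unitI (x + of_int k) y p = e (of_int c * of_int k * of_int p * y) * unitI x y p"
      by (simp add: unitI_def e0)
  next
    fix P :: "real poly" and m n and K :: "(real \<times> real) set"
    show "\<exists>B. \<forall>z\<in>K. \<forall>p. norm (of_real (poly P (of_int p)) * (pdx ^^ m) ((pdy ^^ n) unitI) (fst z) (snd z) p) \<le> B"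
      by (rule exI[of _ "norm (poly P 0)"]) (auto simp: D unitI_def norm_mult)
  qed
qed

lemma unitI_Asa: "unitI \<in> Asa c"
  using unitI_Sc unfolding Asa_def by (auto simp: invol_def unitI_def intro!: ext)

lemma mvt_vec:
  fixes f :: "real \<Rightarrow> complex"
  assumes d: "\<And>t. (f has_vector_derivative f' t) (at t)" and B: "\<And>t. norm (f' t) \<le> B"
  shows "norm (f b - f a) \<le> B * \<bar>b - a\<bar>"
proof -
  have "norm (f b - f a) \<le> B * norm (b - a)"
  proof (rule differentiable_bound[where S=UNIV and f'="\<lambda>t h. h *\<^sub>R f' t"])
    show "convex (UNIV :: real set)" by simp
    fix x :: real
    show "(f has_derivative (\<lambda>h. h *\<^sub>R f' x)) (at x within UNIV)"
      using d[of x] by (simp add: has_vector_derivative_def)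
    have "onorm (\<lambda>h::real. h *\<^sub>R f' x) = onorm (\<lambda>h::real. h) * norm (f' x)"
      by (rule onorm_scaleR_left) (rule bounded_linear_ident)
    also have "\<dots> = norm (f' x)" by (simp add: onorm_id)
    finally show "onorm (\<lambda>h. h *\<^sub>R f' x) \<le> B" using B[of x] by simp
  qed auto
  then show ?thesis by simp
qed

lemma point_le_count:
  fixes f :: "int \<Rightarrow> ennreal"
  shows "f p \<le> (\<integral>\<^sup>+ q. f q \<partial>count_space UNIV)"
proof -
  have "f p = (\<integral>\<^sup>+ q. f p * indicator {p} q \<partial>count_space UNIV)"
    by (subst nn_integral_cmult_indicator) auto
  also have "\<dots> \<le> (\<integral>\<^sup>+ q. f q \<partial>count_space UNIV)"
    by (intro nn_integral_mono) (auto split: split_indicator)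
  finally show ?thesis .
qed

lemma point_le_norm_ii1: "ennreal (norm (\<phi> x y p)) \<le> norm_ii1 \<phi>"
proof -
  have "ennreal (norm (\<phi> x y p)) \<le> (SUP z\<in>(UNIV::(real\<times>real) set). ennreal (norm (\<phi> (fst z) (snd z) p)))"
    by (rule SUP_upper2[of "(x,y)"]) auto
  also have "\<dots> \<le> norm_ii1 \<phi>" unfolding norm_ii1_def by (rule point_le_count)
  finally show ?thesis .
qed

lemma int_periodic:
  fixes g :: "real \<Rightarrow> 'a"
  assumes "\<And>y. g (y + 1) = g y"
  shows "g (y + of_int k) = g y"
proof (induction k rule: int_induct[where k=0])
  case base then show ?case by simp
next
  case (step1 i)
  have "g (y + of_int (i + 1)) = g ((y + of_int i) + 1)" by (simp add: algebra_simps)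
  then show ?case using step1 assms by simp
next
  case (step2 i)
  have "g (y + of_int i) = g (y + of_int (i - 1))"
    using assms[of "y + of_int (i - 1)"] by (simp add: algebra_simps)
  then show ?case using step2 by simp
qed

lemma Lnorm_parts:
  assumes "Lnorm c a \<le> 1"
  shows "norm_ii1 (delta1 a) \<le> 1" "norm_ii1 (delta2 c a) \<le> 1" "norm_ii1 (delta3 a) \<le> 1"
  using assms unfolding Lnorm_def by auto

lemma ennreal_le1: "ennreal r \<le> 1 \<Longrightarrow> r \<le> 1"
  by (metis ennreal_le_1)

lemma bound_p0:
  assumes A: "a \<in> Asa c" and L: "Lnorm c a \<le> 1"
  shows "norm (a x y 0 - a 0 0 0) \<le> 2"
proof -
  have Sc: "a \<in> Sc c" using A unfolding Asa_def by blast
  have sm: "smooth2 (\<lambda>x y. a x y 0)" by (rule ScD(1)[OF Sc])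
  have smd1: "(\<lambda>t. dword [] (\<lambda>x y. a x y 0) t u) differentiable (at v)" for u v
    using sm unfolding smooth2_def by blast
  have smd2: "(\<lambda>t. dword [] (\<lambda>x y. a x y 0) u t) differentiable (at v)" for u v
    using sm unfolding smooth2_def by blast
  have dx: "((\<lambda>t. a t y 0) has_vector_derivative pdx a t y 0) (at t)" for t y
  proof -
    have "(\<lambda>t. a t y 0) differentiable (at t)"
      using smd1[of y t] by simp
    then show ?thesis unfolding pdx_def dx2_def by (rule vector_derivative_works[THEN iffD1])
  qed
  have dy: "((\<lambda>t. a x t 0) has_vector_derivative pdy a x t 0) (at t)" for t x
  proof -
    have "(\<lambda>t. a x t 0) differentiable (at t)"
      using smd2[of x t] by simp
    then show ?thesis unfolding pdy_def dy2_def by (rule vector_derivative_works[THEN iffD1])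
  qed
  have bx: "norm (pdx a t y 0) \<le> 1" for t y
  proof -
    have "ennreal (norm (delta1 a t y 0)) \<le> 1"
      using point_le_norm_ii1[of "delta1 a" t y 0] Lnorm_parts(1)[OF L] by order
    then show ?thesis by (simp add: delta1_def ennreal_le1)
  qed
  have by': "norm (pdy a x t 0) \<le> 1" for t x
  proof -
    have "ennreal (norm (delta2 c a x t 0)) \<le> 1"
      using point_le_norm_ii1[of "delta2 c a" x t 0] Lnorm_parts(2)[OF L] by order
    then show ?thesis by (simp add: delta2_def ennreal_le1)
  qed
  define x' where "x' = x - of_int \<lfloor>x\<rfloor>"
  define y' where "y' = y - of_int \<lfloor>y\<rfloor>"
  have x'r: "0 \<le> x'" "x' \<le> 1" unfolding x'_def by linarith+
  have y'r: "0 \<le> y'" "y' \<le> 1" unfolding y'_def by linarith+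
  have "a x y 0 = a (x' + of_int \<lfloor>x\<rfloor>) y 0" unfolding x'_def by simp
  also have "\<dots> = a x' y 0" using ScD(3)[OF Sc, where x=x' and y=y and p=0 and k="\<lfloor>x\<rfloor>"] by (simp add: e0)
  also have "\<dots> = a x' (y' + of_int \<lfloor>y\<rfloor>) 0" unfolding y'_def by simp
  also have "\<dots> = a x' y' 0" using int_periodic[of "\<lambda>t. a x' t 0"] ScD(2)[OF Sc] by blast
  finally have eq: "a x y 0 = a x' y' 0" .
  have n1: "norm (a x' y' 0 - a 0 y' 0) \<le> 1"
    using mvt_vec[of "\<lambda>t. a t y' 0" "\<lambda>t. pdx a t y' 0" 1 x' 0, OF dx bx] x'r by simp
  have n2: "norm (a 0 y' 0 - a 0 0 0) \<le> 1"
    using mvt_vec[of "\<lambda>t. a 0 t 0" "\<lambda>t. pdy a 0 t 0" 1 y' 0, OF dy by'] y'r by simp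
  have "norm (a x y 0 - a 0 0 0) \<le> norm (a x' y' 0 - a 0 y' 0) + norm (a 0 y' 0 - a 0 0 0)"
    unfolding eq by (rule norm_diff_triangle_ineq[THEN order_trans[rotated]]) simp
  then show ?thesis using n1 n2 by simp
qed

lemma bound_p:
  assumes "p \<noteq> 0"
  shows "norm (a x y p) \<le> norm (delta3 a x y p)"
proof -
  have "1 \<le> 2 * pi * \<bar>real_of_int p\<bar>"
  proof -
    have "1 \<le> \<bar>real_of_int p\<bar>" using assms by linarith
    moreover have "1 \<le> 2 * pi" using pi_gt3 by simp
    ultimately show ?thesis using mult_mono[of 1 "2*pi" 1 "\<bar>real_of_int p\<bar>"] by simp
  qed
  then have "norm (a x y p) \<le> 2 * pi * \<bar>real_of_int p\<bar> * norm (a x y p)"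
    using mult_right_mono[of 1 _ "norm (a x y p)"] by simp
  also have "\<dots> = norm (delta3 a x y p)" by (simp add: delta3_def norm_mult)
  finally show ?thesis .
qed

lemma a000_real:
  assumes A: "a \<in> Asa c"
  shows "a 0 0 0 = of_real (Re (a 0 0 0))"
proof -
  have "invol a 0 0 0 = a 0 0 0" using A unfolding Asa_def by simp
  then have "cnj (a 0 0 0) = a 0 0 0" by (simp add: invol_def)
  then have "Im (a 0 0 0) = 0" by (metis complex_cnj_cancel_iff complex_cnj_zero_iff diff_self Im_complex_div_eq_0 cnj.simps(2) complex.expand neg_equal_zero)
  then show ?thesis by (simp add: complex_eq_iff)
qed

lemma psi_norm:
  assumes A: "a \<in> Asa c" and L: "Lnorm c a \<le> 1"
  shows "norm_ii1 (\<lambda>x y p. of_real (1/3) * (a x y p + of_real (- Re (a 0 0 0)) * unitI x y p)) \<le> 1"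
proof -
  define t where "t = Re (a 0 0 0)"
  have t: "a 0 0 0 = of_real t" unfolding t_def by (rule a000_real[OF A])
  define s3 where "s3 p = (SUP z\<in>(UNIV::(real\<times>real) set). ennreal (norm (delta3 a (fst z) (snd z) p)))" for p
  define g where "g p = ennreal (2/3) * indicator {0} p + ennreal (1/3) * s3 p" for p :: int
  have pt: "ennreal (norm (of_real (1/3) * (a x y p + of_real (- t) * unitI x y p))) \<le> g p" for x y p
  proof (cases "p = 0")
    case True
    have "norm (of_real (1/3) * (a x y p + of_real (- t) * unitI x y p)) = (1/3) * norm (a x y 0 - a 0 0 0)"
      using True by (simp add: unitI_def t norm_mult)
    also have "\<dots> \<le> (1/3) * 2" using bound_p0[OF A L, of x y] by simp
    finally have "ennreal (norm (of_real (1/3) * (a x y p + of_real (- t) * unitI x y p))) \<le> ennreal (2/3)"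
      by (intro ennreal_leI) simp
    also have "\<dots> \<le> g p" unfolding g_def using True by simp
    finally show ?thesis .
  next
    case False
    have "norm (of_real (1/3) * (a x y p + of_real (- t) * unitI x y p)) = (1/3) * norm (a x y p)"
      using False by (simp add: unitI_def norm_mult)
    also have "\<dots> \<le> (1/3) * norm (delta3 a x y p)" using bound_p[OF False, of a x y] by simp
    finally have "ennreal (norm (of_real (1/3) * (a x y p + of_real (- t) * unitI x y p))) \<le> ennreal ((1/3) * norm (delta3 a x y p))"
      by (intro ennreal_leI)
    also have "\<dots> = ennreal (1/3) * ennreal (norm (delta3 a x y p))" by (rule ennreal_mult) auto
    also have "\<dots> \<le> ennreal (1/3) * s3 p"
      unfolding s3_def by (intro mult_left_mono SUP_upper2[of "(x,y)"]) auto
    also have "\<dots> \<le> g p" unfolding g_def by simp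
    finally show ?thesis .
  qed
  have "norm_ii1 (\<lambda>x y p. of_real (1/3) * (a x y p + of_real (- t) * unitI x y p)) \<le> (\<integral>\<^sup>+ p. g p \<partial>count_space UNIV)"
    unfolding norm_ii1_def using pt by (intro nn_integral_mono SUP_least) auto
  also have "(\<integral>\<^sup>+ p. g p \<partial>count_space UNIV) = ennreal (2/3) + ennreal (1/3) * norm_ii1 (delta3 a)"
    unfolding g_def norm_ii1_def s3_def
    by (subst nn_integral_add) (auto simp: nn_integral_cmult nn_integral_cmult_indicator)
  also have "\<dots> \<le> ennreal (2/3) + ennreal (1/3) * 1"
    using Lnorm_parts(3)[OF L] by (intro add_left_mono mult_left_mono) auto
  also have "\<dots> = 1" by (simp flip: ennreal_plus)
  finally show ?thesis unfolding t_def .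
qed

lemma ennreal_2ab: "2 * (a * b) \<le> a ^ 2 + (b::ennreal) ^ 2"
proof (cases a rule: ennreal_cases)
  case (real x)
  then show ?thesis
  proof (cases b rule: ennreal_cases)
    case (real y)
    have "2 * (ennreal x * ennreal y) = ennreal (2 * x * y)"
      using \<open>0 \<le> x\<close> \<open>0 \<le> y\<close> by (simp add: ennreal_mult mult.assoc)
    also have "\<dots> \<le> ennreal (x^2 + y^2)"
      by (intro ennreal_leI) (simp add: sum_squares_bound)
    also have "\<dots> = ennreal x ^ 2 + ennreal y ^ 2"
      using \<open>0 \<le> x\<close> \<open>0 \<le> y\<close> by (simp add: ennreal_plus ennreal_power)
    finally show ?thesis using real \<open>a = ennreal x\<close> by simp
  next
    case top
    then show ?thesis using \<open>a = ennreal x\<close> by (cases "x = 0") (auto simp: ennreal_mult_top)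
  qed
next
  case top
  then show ?thesis by (cases "b = 0") (auto simp: ennreal_top_mult)
qed

lemma ennreal_CS:
  fixes s v :: "int \<Rightarrow> ennreal"
  shows "(\<integral>\<^sup>+ q. s q * v q \<partial>count_space UNIV) ^ 2 \<le>
    (\<integral>\<^sup>+ q. s q \<partial>count_space UNIV) * (\<integral>\<^sup>+ q. s q * v q ^ 2 \<partial>count_space UNIV)"
proof -
  let ?C = "count_space (UNIV :: int set)"
  define X where "X = (\<integral>\<^sup>+ q. s q * v q \<partial>?C)"
  define S where "S = (\<integral>\<^sup>+ q. s q \<partial>?C)"
  define Y where "Y = (\<integral>\<^sup>+ q. s q * v q ^ 2 \<partial>?C)"
  have XX: "X * X = (\<integral>\<^sup>+ q. \<integral>\<^sup>+ r. (s q * v q) * (s r * v r) \<partial>?C \<partial>?C)"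
    unfolding X_def
    by (subst nn_integral_multc[symmetric]) (auto simp: nn_integral_cmult intro!: nn_integral_cong)
  have "2 * (X * X) = (\<integral>\<^sup>+ q. \<integral>\<^sup>+ r. 2 * ((s q * v q) * (s r * v r)) \<partial>?C \<partial>?C)"
    unfolding XX by (simp add: nn_integral_cmult)
  also have "\<dots> \<le> (\<integral>\<^sup>+ q. \<integral>\<^sup>+ r. (s q * s r * v q ^ 2) + (s q * s r * v r ^ 2) \<partial>?C \<partial>?C)"
  proof (intro nn_integral_mono)
    fix q r
    have "2 * ((s q * v q) * (s r * v r)) = (s q * s r) * (2 * (v q * v r))" by (simp add: ac_simps)
    also have "\<dots> \<le> (s q * s r) * (v q ^ 2 + v r ^ 2)" by (intro mult_left_mono ennreal_2ab) auto
    also have "\<dots> = (s q * s r * v q ^ 2) + (s q * s r * v r ^ 2)" by (simp add: distrib_left)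
    finally show "2 * ((s q * v q) * (s r * v r)) \<le> (s q * s r * v q ^ 2) + (s q * s r * v r ^ 2)" .
  qed
  also have "\<dots> = (\<integral>\<^sup>+ q. \<integral>\<^sup>+ r. s q * s r * v q ^ 2 \<partial>?C \<partial>?C) + (\<integral>\<^sup>+ q. \<integral>\<^sup>+ r. s q * s r * v r ^ 2 \<partial>?C \<partial>?C)"
    by (subst nn_integral_add[symmetric]) (auto intro!: nn_integral_cong nn_integral_add)
  also have "(\<integral>\<^sup>+ q. \<integral>\<^sup>+ r. s q * s r * v q ^ 2 \<partial>?C \<partial>?C) = (\<integral>\<^sup>+ q. (s q * v q ^ 2) * S \<partial>?C)"
  proof (intro nn_integral_cong)
    fix q
    show "(\<integral>\<^sup>+ r. s q * s r * v q ^ 2 \<partial>?C) = (s q * v q ^ 2) * S"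
      unfolding S_def by (subst nn_integral_cmult[symmetric]) (auto intro!: nn_integral_cong simp: ac_simps)
  qed
  also have "\<dots> = Y * S" unfolding Y_def by (rule nn_integral_multc) auto
  also have "(\<integral>\<^sup>+ q. \<integral>\<^sup>+ r. s q * s r * v r ^ 2 \<partial>?C \<partial>?C) = (\<integral>\<^sup>+ q. s q * Y \<partial>?C)"
  proof (intro nn_integral_cong)
    fix q
    show "(\<integral>\<^sup>+ r. s q * s r * v r ^ 2 \<partial>?C) = s q * Y"
      unfolding Y_def by (subst nn_integral_cmult[symmetric]) (auto intro!: nn_integral_cong simp: ac_simps)
  qed
  also have "\<dots> = S * Y" unfolding S_def by (rule nn_integral_multc) auto
  finally have "2 * (X * X) \<le> 2 * (S * Y)" by (simp add: mult.commute mult_2_right)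
  then have "X * X \<le> S * Y"
    by (subst (asm) ennreal_mult_le_mult_iff) auto
  then show ?thesis unfolding X_def S_def Y_def by (simp add: power2_eq_square)
qed

lemma repr_pt:
  fixes \<phi> \<xi> :: fn3
  shows "ennreal (norm (repr h \<mu> \<nu> \<phi> \<xi> x y p)) \<le>
    (\<integral>\<^sup>+q. (SUP z\<in>(UNIV::(real\<times>real) set). ennreal (norm (\<phi> (fst z) (snd z) q))) * ennreal (norm (\<xi> x y (p - q))) \<partial>count_space UNIV)"
    (is "_ \<le> ?T")
proof -
  define s where "s q = (SUP z\<in>(UNIV::(real\<times>real) set). ennreal (norm (\<phi> (fst z) (snd z) q)))" for q
  define w where "w q = \<phi> (x - h * of_int (q - 2*p) * \<mu>) (y - h * of_int (q - 2*p) * \<nu>) q * \<xi> x y (p - q)" for q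
  have R: "repr h \<mu> \<nu> \<phi> \<xi> x y p = infsum w UNIV" unfolding repr_def w_def by simp
  have wle: "ennreal (norm (w q)) \<le> s q * ennreal (norm (\<xi> x y (p - q)))" for q
  proof -
    have "ennreal (norm (w q)) = ennreal (norm (\<phi> (x - h * of_int (q - 2*p) * \<mu>) (y - h * of_int (q - 2*p) * \<nu>) q)) * ennreal (norm (\<xi> x y (p - q)))"
      unfolding w_def norm_mult by (rule ennreal_mult) auto
    also have "\<dots> \<le> s q * ennreal (norm (\<xi> x y (p - q)))"
      unfolding s_def by (intro mult_right_mono SUP_upper2[of "(x - h * of_int (q - 2*p) * \<mu>, y - h * of_int (q - 2*p) * \<nu>)"]) auto
    finally show ?thesis .
  qed
  have T: "?T = (\<integral>\<^sup>+q. s q * ennreal (norm (\<xi> x y (p - q))) \<partial>count_space UNIV)" unfolding s_def ..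
  show ?thesis
  proof (cases "?T = top")
    case True then show ?thesis by simp
  next
    case False
    have le: "(\<integral>\<^sup>+q. ennreal (norm (w q)) \<partial>count_space UNIV) \<le> ?T"
      unfolding T by (intro nn_integral_mono wle)
    then have fin: "(\<integral>\<^sup>+q. ennreal (norm (w q)) \<partial>count_space UNIV) < top"
    proof -
      have "?T < top" using False by (simp add: less_top)
      then show ?thesis using le_less_trans[OF le] by simp
    qed
    have int: "integrable (count_space UNIV) w"
      by (rule integrableI_bounded) (auto simp: fin)
    have as: "Infinite_Set_Sum.abs_summable_on w UNIV"
      unfolding abs_summable_on_def using int .
    have as2: "Infinite_Set_Sum.abs_summable_on (\<lambda>q. norm (w q)) UNIV"
      using as by (rule abs_summable_on_normI)
    have "norm (infsum w UNIV) \<le> infsum (\<lambda>q. norm (w q)) UNIV"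
      by (rule norm_infsum_bound) (use as abs_summable_equivalent in blast)
    also have "\<dots> = infsetsum (\<lambda>q. norm (w q)) UNIV"
      by (rule infsetsum_infsum[symmetric]) (rule as2)
    finally have "ennreal (norm (infsum w UNIV)) \<le> ennreal (infsetsum (\<lambda>q. norm (w q)) UNIV)"
      by (rule ennreal_leI)
    also have "\<dots> = (\<integral>\<^sup>+q. ennreal (norm (w q)) \<partial>count_space UNIV)"
      by (rule nn_integral_conv_infsetsum[symmetric]) (use as2 in auto)
    also have "\<dots> \<le> ?T" by (rule le)
    finally show ?thesis unfolding R .
  qed
qed

lemma ind_meas: "(\<lambda>z::real\<times>real. indicator (UNIV \<times> {0..<1}) z :: ennreal) \<in> borel_measurable borel"
proof -
  have eq: "UNIV \<times> {0..<1::real} = snd -` {0..<1}" by auto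
  have mem: "snd -` {0..<1::real} \<in> sets (borel :: (real\<times>real) measure)"
  proof -
    have "(snd :: real\<times>real \<Rightarrow> real) \<in> borel_measurable borel"
      by (intro borel_measurable_continuous_onI continuous_on_snd continuous_on_id)
    from measurable_sets[OF this atLeastLessThan_borel] show ?thesis by simp
  qed
  have "UNIV \<times> {0..<1::real} \<in> sets (borel :: (real\<times>real) measure)"
    unfolding eq by (rule mem)
  then show ?thesis by (rule borel_measurable_indicator)
qed

lemma l2_bound:
  fixes \<phi> \<xi> :: fn3
  assumes meas: "\<And>p. (\<lambda>z. \<xi> (fst z) (snd z) p) \<in> borel_measurable borel"
  shows "l2sq (repr h \<mu> \<nu> \<phi> \<xi>) \<le> norm_ii1 \<phi> * norm_ii1 \<phi> * l2sq \<xi>"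
proof -
  let ?C = "count_space (UNIV :: int set)"
  define s where "s q = (SUP z\<in>(UNIV::(real\<times>real) set). ennreal (norm (\<phi> (fst z) (snd z) q)))" for q
  define S where "S = norm_ii1 \<phi>"
  have S: "S = (\<integral>\<^sup>+q. s q \<partial>?C)" unfolding S_def norm_ii1_def s_def ..
  define u where "u p z = ennreal (norm (\<xi> (fst z) (snd z) p))" for p z
  define ind where "ind z = (indicator (UNIV \<times> {0..<1}) z :: ennreal)" for z :: "real \<times> real"
  define L where "L p = (\<integral>\<^sup>+z. u p z ^ 2 * ind z \<partial>lborel)" for p
  have l2: "l2sq \<xi> = (\<integral>\<^sup>+p. L p \<partial>?C)"
    unfolding l2sq_def L_def u_def ind_def by (simp add: ennreal_power)
  have mu0[measurable]: "u p \<in> borel_measurable borel" for p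
  proof -
    have "(\<lambda>z. \<xi> (fst z) (snd z) p) \<in> borel_measurable borel" by (rule meas)
    then show "u p \<in> borel_measurable borel" unfolding u_def[abs_def] by measurable
  qed
  have ind0[measurable]: "ind \<in> borel_measurable borel"
    unfolding ind_def[abs_def] by (rule ind_meas)
  have mu: "(\<lambda>z. u p z ^ 2 * ind z) \<in> borel_measurable lborel" for p
    by simp measurable
  define r where "r = repr h \<mu> \<nu> \<phi> \<xi>"
  have pt: "ennreal (norm (r (fst z) (snd z) p) ^ 2) \<le> S * (\<integral>\<^sup>+q. s q * u (p - q) z ^ 2 \<partial>?C)" for z p
  proof -
    have "ennreal (norm (r (fst z) (snd z) p) ^ 2) = ennreal (norm (r (fst z) (snd z) p)) ^ 2"
      by (simp add: ennreal_power)
    also have "\<dots> \<le> (\<integral>\<^sup>+q. s q * u (p - q) z \<partial>?C) ^ 2"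
      unfolding r_def s_def u_def by (intro power_mono repr_pt) auto
    also have "\<dots> \<le> S * (\<integral>\<^sup>+q. s q * u (p - q) z ^ 2 \<partial>?C)"
      unfolding S by (rule ennreal_CS)
    finally show ?thesis .
  qed
  have "l2sq r \<le> (\<integral>\<^sup>+p. \<integral>\<^sup>+z. (S * (\<integral>\<^sup>+q. s q * u (p - q) z ^ 2 \<partial>?C)) * ind z \<partial>lborel \<partial>?C)"
    unfolding l2sq_def ind_def by (intro nn_integral_mono mult_right_mono pt) auto
  also have "\<dots> = (\<integral>\<^sup>+p. \<integral>\<^sup>+z. \<integral>\<^sup>+q. S * s q * (u (p - q) z ^ 2 * ind z) \<partial>?C \<partial>lborel \<partial>?C)"
  proof (intro nn_integral_cong)
    fix p z
    show "(S * (\<integral>\<^sup>+q. s q * u (p - q) z ^ 2 \<partial>?C)) * ind z = (\<integral>\<^sup>+q. S * s q * (u (p - q) z ^ 2 * ind z) \<partial>?C)"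
    proof -
      have e1: "(\<integral>\<^sup>+q. S * (s q * u (p - q) z ^ 2) * ind z \<partial>?C) = (\<integral>\<^sup>+q. S * (s q * u (p - q) z ^ 2) \<partial>?C) * ind z"
        by (rule nn_integral_multc) simp
      have e2: "(\<integral>\<^sup>+q. S * (s q * u (p - q) z ^ 2) \<partial>?C) = S * (\<integral>\<^sup>+q. s q * u (p - q) z ^ 2 \<partial>?C)"
        by (rule nn_integral_cmult) simp
      have e3: "(\<integral>\<^sup>+q. S * s q * (u (p - q) z ^ 2 * ind z) \<partial>?C) = (\<integral>\<^sup>+q. S * (s q * u (p - q) z ^ 2) * ind z \<partial>?C)"
        by (intro nn_integral_cong) (simp add: ac_simps)
      show ?thesis unfolding e3 e1 e2 ..
    qed
  qed
  also have "\<dots> = (\<integral>\<^sup>+p. \<integral>\<^sup>+q. \<integral>\<^sup>+z. S * s q * (u (p - q) z ^ 2 * ind z) \<partial>lborel \<partial>?C \<partial>?C)"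
  proof (intro nn_integral_cong)
    fix p
    show "(\<integral>\<^sup>+z. \<integral>\<^sup>+q. S * s q * (u (p - q) z ^ 2 * ind z) \<partial>?C \<partial>lborel) = (\<integral>\<^sup>+q. \<integral>\<^sup>+z. S * s q * (u (p - q) z ^ 2 * ind z) \<partial>lborel \<partial>?C)"
      by (rule nn_integral_count_space_nn_integral) (simp, measurable)
  qed
  also have "\<dots> = (\<integral>\<^sup>+p. \<integral>\<^sup>+q. S * s q * L (p - q) \<partial>?C \<partial>?C)"
    unfolding L_def by (intro nn_integral_cong nn_integral_cmult mu)
  also have "\<dots> = (\<integral>\<^sup>+q. \<integral>\<^sup>+p. S * s q * L (p - q) \<partial>?C \<partial>?C)"
    by (rule nn_integral_count_space_nn_integral) auto
  also have "\<dots> = (\<integral>\<^sup>+q. S * s q * l2sq \<xi> \<partial>?C)"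
  proof (intro nn_integral_cong)
    fix q
    have bij: "bij_betw (\<lambda>p. p - q) (UNIV :: int set) UNIV"
      by (rule bij_betwI[where g="\<lambda>p. p + q"]) auto
    have "(\<integral>\<^sup>+p. S * s q * L (p - q) \<partial>?C) = S * s q * (\<integral>\<^sup>+p. L (p - q) \<partial>?C)"
      by (rule nn_integral_cmult) simp
    also have "(\<integral>\<^sup>+p. L (p - q) \<partial>?C) = (\<integral>\<^sup>+p. L p \<partial>?C)"
      using nn_integral_bij_count_space[OF bij, of L] by simp
    finally show "(\<integral>\<^sup>+p. S * s q * L (p - q) \<partial>?C) = S * s q * l2sq \<xi>" unfolding l2 .
  qed
  also have "\<dots> = (\<integral>\<^sup>+q. (S * l2sq \<xi>) * s q \<partial>?C)"
    by (intro nn_integral_cong) (simp add: ac_simps)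
  also have "\<dots> = S * l2sq \<xi> * S"
    unfolding S by (rule nn_integral_cmult) simp
  finally show ?thesis unfolding r_def S_def by (simp add: ac_simps)
qed

lemma cnorm_le:
  assumes N: "norm_ii1 \<phi> \<le> 1"
  shows "cnorm h \<mu> \<nu> \<phi> \<le> 1"
proof -
  have "(SUP \<xi>\<in>L2unit. l2sq (repr h \<mu> \<nu> \<phi> \<xi>)) \<le> 1"
  proof (rule SUP_least)
    fix \<xi> assume "\<xi> \<in> L2unit"
    then have meas: "\<And>p. (\<lambda>z. \<xi> (fst z) (snd z) p) \<in> borel_measurable borel" and l: "l2sq \<xi> \<le> 1"
      unfolding L2unit_def by auto
    have "l2sq (repr h \<mu> \<nu> \<phi> \<xi>) \<le> norm_ii1 \<phi> * norm_ii1 \<phi> * l2sq \<xi>"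
      by (rule l2_bound[OF meas])
    also have "\<dots> \<le> 1 * 1 * 1"
      using N l by (intro mult_mono) auto
    finally show "l2sq (repr h \<mu> \<nu> \<phi> \<xi>) \<le> 1" by simp
  qed
  then have "enn2real (SUP \<xi>\<in>L2unit. l2sq (repr h \<mu> \<nu> \<phi> \<xi>)) \<le> enn2real 1"
    by (rule enn2real_mono) simp
  then show ?thesis unfolding cnorm_def by simp
qed

lemma cnorm_nonneg: "0 \<le> cnorm h \<mu> \<nu> \<phi>"
  unfolding cnorm_def by simp

lemma state_bound:
  assumes w: "\<omega> \<in> states c h \<mu> \<nu>" and a: "a \<in> Asa c" and n: "cnorm h \<mu> \<nu> a \<le> 1"
  shows "\<bar>\<omega> a\<bar> \<le> 1"
proof -
  obtain K where K: "\<forall>a\<in>Asa c. \<bar>\<omega> a\<bar> \<le> K * cnorm h \<mu> \<nu> a"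
    using w unfolding states_def by blast
  have S: "(SUP a\<in>{a\<in>Asa c. cnorm h \<mu> \<nu> a \<le> 1}. \<bar>\<omega> a\<bar>) = 1"
    using w unfolding states_def by blast
  have bdd: "bdd_above ((\<lambda>a. \<bar>\<omega> a\<bar>) ` {a\<in>Asa c. cnorm h \<mu> \<nu> a \<le> 1})"
  proof (rule bdd_aboveI2)
    fix b assume b: "b \<in> {a\<in>Asa c. cnorm h \<mu> \<nu> a \<le> 1}"
    have "\<bar>\<omega> b\<bar> \<le> K * cnorm h \<mu> \<nu> b" using K b by blast
    also have "\<dots> \<le> \<bar>K\<bar> * cnorm h \<mu> \<nu> b" by (intro mult_right_mono cnorm_nonneg) simp
    also have "\<dots> \<le> \<bar>K\<bar> * 1" using b by (intro mult_left_mono) auto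
    finally show "\<bar>\<omega> b\<bar> \<le> \<bar>K\<bar>" by simp
  qed
  have "\<bar>\<omega> a\<bar> \<le> (SUP a\<in>{a\<in>Asa c. cnorm h \<mu> \<nu> a \<le> 1}. \<bar>\<omega> a\<bar>)"
    by (rule cSUP_upper[OF _ bdd]) (use a n in simp)
  then show ?thesis using S by simp
qed

lemma key:
  assumes w1: "\<omega>1 \<in> states c h \<mu> \<nu>" and w2: "\<omega>2 \<in> states c h \<mu> \<nu>"
    and A: "a \<in> Asa c" and L: "Lnorm c a \<le> 1"
  shows "\<bar>\<omega>1 a - \<omega>2 a\<bar> \<le> 6"
proof -
  define t where "t = Re (a 0 0 0)"
  define b where "b = (\<lambda>x y p. of_real (- t) * unitI x y p)"
  define ab where "ab = (\<lambda>x y p. a x y p + b x y p)"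
  define \<psi> where "\<psi> = (\<lambda>x y p. of_real (1/3) * ab x y p)"
  have bA: "b \<in> Asa c"
  proof -
    have "(\<lambda>x y p. of_real (- t) * unitI x y p + of_real 0 * unitI x y p) \<in> Asa c"
      by (rule Asa_lin[OF unitI_Asa unitI_Asa])
    moreover have "(\<lambda>x y p. of_real (- t) * unitI x y p + of_real 0 * unitI x y p) = b"
      unfolding b_def by (intro ext) simp
    ultimately show ?thesis by simp
  qed
  have abA: "ab \<in> Asa c"
  proof -
    have "(\<lambda>x y p. of_real 1 * a x y p + of_real 1 * b x y p) \<in> Asa c"
      by (rule Asa_lin[OF A bA])
    moreover have "(\<lambda>x y p. of_real 1 * a x y p + of_real 1 * b x y p) = ab"
      unfolding ab_def by (intro ext) simp
    ultimately show ?thesis by simp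
  qed
  have psiA: "\<psi> \<in> Asa c"
  proof -
    have "(\<lambda>x y p. of_real (1/3) * ab x y p + of_real 0 * ab x y p) \<in> Asa c"
      by (rule Asa_lin[OF abA abA])
    moreover have "(\<lambda>x y p. of_real (1/3) * ab x y p + of_real 0 * ab x y p) = \<psi>"
      unfolding \<psi>_def by (intro ext) simp
    ultimately show ?thesis by simp
  qed
  have "norm_ii1 \<psi> \<le> 1"
    using psi_norm[OF A L] unfolding \<psi>_def ab_def b_def t_def .
  then have cn: "cnorm h \<mu> \<nu> \<psi> \<le> 1" by (rule cnorm_le)
  have val: "\<omega> \<psi> = (1/3) * (\<omega> a - t)" if w: "\<omega> \<in> states c h \<mu> \<nu>" for \<omega>
  proof -
    have add: "\<forall>a\<in>Asa c. \<forall>b\<in>Asa c. \<omega> (\<lambda>x y p. a x y p + b x y p) = \<omega> a + \<omega> b"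
      and sc: "\<forall>a\<in>Asa c. \<forall>r::real. \<omega> (\<lambda>x y p. of_real r * a x y p) = r * \<omega> a"
      and u: "\<omega> unitI = 1"
      using w unfolding states_def by blast+
    have "\<omega> \<psi> = (1/3) * \<omega> ab" unfolding \<psi>_def using sc abA by blast
    also have "\<omega> ab = \<omega> a + \<omega> b" unfolding ab_def using add A bA by blast
    also have "\<omega> b = - t * \<omega> unitI" unfolding b_def using sc unitI_Asa by blast
    finally show ?thesis using u by simp
  qed
  have "\<bar>\<omega>1 \<psi>\<bar> \<le> 1" by (rule state_bound[OF w1 psiA cn])
  moreover have "\<bar>\<omega>2 \<psi>\<bar> \<le> 1" by (rule state_bound[OF w2 psiA cn])
  ultimately show ?thesis using val[OF w1] val[OF w2] by (simp add: abs_le_iff)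
qed

theorem mainTheorem4:
  fixes c :: int and h \<mu> \<nu> :: real and \<omega>1 \<omega>2 :: "fn3 \<Rightarrow> real"
  assumes "c > 0" and "\<mu>\<^sup>2 + \<nu>\<^sup>2 \<noteq> 0"
    and "\<omega>1 \<in> states c h \<mu> \<nu>" and "\<omega>2 \<in> states c h \<mu> \<nu>"
  shows "rhoL c \<omega>1 \<omega>2 \<le> 6"
  unfolding rhoL_def
proof (rule SUP_least)
  fix a assume "a \<in> {a \<in> Asa c. Lnorm c a \<le> 1}"
  then have "\<bar>\<omega>1 a - \<omega>2 a\<bar> \<le> 6" using key[OF assms(3,4)] by blast
  then show "ereal \<bar>\<omega>1 a - \<omega>2 a\<bar> \<le> 6" by simp
qed

end
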